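(* For every $m\in\mathbb{Z}$: (i) $s_2s_1^ms_2\in U$; (ii) $s_2^{-1}s_1^ms_2^{-1}\in U'$; (iii) $s_2^{-2}s_1^ms_2^{-1}\in U'$.
   Context: Let $B_3=\langle s_1,s_2\mid s_1s_2s_1=s_2s_1s_2\rangle$, $R_4=\mathbb{Z}[a,b,c,d,d^{-1}]$, and let $H_4$ be the quotient of the group algebra $R_4B_3$ by the relations $s_i^4=as_i^3+bs_i^2+cs_i+d$ for $i=1,2$; identify $s_i$ with their images in $H_4$. For $i=1,2$ let $u_i$ be the $R_4$-subalgebra of $H_4$ generated by $s_i$. For $R_4$-submodules (or elements) $X_1,\dots,X_n$ of $H_4$, $X_1\cdots X_n$ denotes the $R_4$-submodule spanned by all products $x_1\cdots x_n$ with $x_j\in X_j$, and sums are sums of submodules. Define $U'=u_1u_2u_1+u_1s_2s_1^{-1}s_2u_1+u_1s_2^{-1}s_1s_2^{-1}u_1+u_1s_2^{-1}s_1^{-2}s_2^{-1}$ and $U=U'+u_1s_2s_1^{-2}s_2u_1+u_1s_2^{-2}s_1^{-2}s_2^{-2}u_1$. *)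

theory Defs
  imports Main
begin

text \<open>H_4 is realised through its universal property: an arbitrary ring A containing
central elements a,b,c,d with d invertible (so that R_4 maps onto the subring they
generate) and invertible s1,s2 satisfying the braid and quartic relations.
The subring generated by a,b,c,d,d^{-1} is the image of R_4.\<close>

inductive_set coeff_ring :: "'a::ring_1 \<Rightarrow> 'a \<Rightarrow> 'a \<Rightarrow> 'a \<Rightarrow> 'a \<Rightarrow> 'a set"
  for a b c d d' :: "'a::ring_1" where
  one: "1 \<in> coeff_ring a b c d d'"
| gen_a: "a \<in> coeff_ring a b c d d'"
| gen_b: "b \<in> coeff_ring a b c d d'"
| gen_c: "c \<in> coeff_ring a b c d d'"
| gen_d: "d \<in> coeff_ring a b c d d'"
| gen_dinv: "d' \<in> coeff_ring a b c d d'"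
| neg: "x \<in> coeff_ring a b c d d' \<Longrightarrow> - x \<in> coeff_ring a b c d d'"
| add: "x \<in> coeff_ring a b c d d' \<Longrightarrow> y \<in> coeff_ring a b c d d' \<Longrightarrow> x + y \<in> coeff_ring a b c d d'"
| mult: "x \<in> coeff_ring a b c d d' \<Longrightarrow> y \<in> coeff_ring a b c d d' \<Longrightarrow> x * y \<in> coeff_ring a b c d d'"

inductive_set rspan :: "'a::ring_1 set \<Rightarrow> 'a set \<Rightarrow> 'a set"
  for R S :: "'a::ring_1 set" where
  zero: "0 \<in> rspan R S"
| smul: "r \<in> R \<Longrightarrow> x \<in> S \<Longrightarrow> r * x \<in> rspan R S"
| add: "x \<in> rspan R S \<Longrightarrow> y \<in> rspan R S \<Longrightarrow> x + y \<in> rspan R S"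

definition mprod :: "'a::ring_1 set \<Rightarrow> 'a set list \<Rightarrow> 'a set" where
  "mprod R Xs = rspan R {foldr (*) xs 1 | xs. list_all2 (\<lambda>x X. x \<in> X) xs Xs}"

definition msum :: "'a::ring_1 set \<Rightarrow> 'a set \<Rightarrow> 'a set" where
  "msum X Y = {x + y | x y. x \<in> X \<and> y \<in> Y}"

definition zpow :: "'a::ring_1 \<Rightarrow> 'a \<Rightarrow> int \<Rightarrow> 'a" where
  "zpow s s' m = (if 0 \<le> m then s ^ nat m else s' ^ nat (- m))"

definition subalg :: "'a::ring_1 set \<Rightarrow> 'a \<Rightarrow> 'a set" where
  "subalg R s = rspan R {s ^ n | n. True}"

definition Uprime :: "'a::ring_1 set \<Rightarrow> 'a \<Rightarrow> 'a \<Rightarrow> 'a \<Rightarrow> 'a \<Rightarrow> 'a set" where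
  "Uprime R s1 s2 s1' s2' =
     (let u1 = subalg R s1; u2 = subalg R s2 in
      msum (msum (msum (mprod R [u1, u2, u1])
                       (mprod R [u1, {s2 * s1' * s2}, u1]))
                 (mprod R [u1, {s2' * s1 * s2'}, u1]))
           (mprod R [u1, {s2' * s1' ^ 2 * s2'}]))"

definition Ufull :: "'a::ring_1 set \<Rightarrow> 'a \<Rightarrow> 'a \<Rightarrow> 'a \<Rightarrow> 'a \<Rightarrow> 'a set" where
  "Ufull R s1 s2 s1' s2' =
     (let u1 = subalg R s1 in
      msum (msum (Uprime R s1 s2 s1' s2')
                 (mprod R [u1, {s2 * s1' ^ 2 * s2}, u1]))
           (mprod R [u1, {s2' ^ 2 * s1' ^ 2 * s2' ^ 2}, u1]))"

end

theory Submission
  imports Defs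
begin

definition is_mod :: "'a::ring_1 set \<Rightarrow> 'a set \<Rightarrow> bool" where
  "is_mod R M \<longleftrightarrow> 0 \<in> M \<and> (\<forall>x\<in>M. \<forall>y\<in>M. x + y \<in> M) \<and> (\<forall>r\<in>R. \<forall>x\<in>M. r * x \<in> M)"

lemma rspan_mod:
  assumes "\<forall>r\<in>R. \<forall>r'\<in>R. r * r' \<in> R"
  shows "is_mod R (rspan R S)"
  unfolding is_mod_def
proof (intro conjI ballI)
  show "0 \<in> rspan R S" by (rule rspan.zero)
next
  fix x y assume "x \<in> rspan R S" "y \<in> rspan R S"
  thus "x + y \<in> rspan R S" by (rule rspan.add)
next
  fix r x assume r: "r \<in> R" and xS: "x \<in> rspan R S"
  from xS show "r * x \<in> rspan R S"
  proof induction
    case zero show ?case by (simp add: rspan.zero)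
  next
    case (smul r' x) then show ?case using assms r by (metis mult.assoc rspan.smul)
  next
    case (add x y) then show ?case by (simp add: distrib_left rspan.add)
  qed
qed

lemma mod_pre:
  assumes "is_mod R M" "\<forall>r\<in>R. \<forall>x. r * x = x * r"
  shows "is_mod R {x. p * x * q \<in> M}"
  unfolding is_mod_def
proof (intro conjI ballI)
  show "0 \<in> {x. p * x * q \<in> M}" using assms(1) unfolding is_mod_def by simp
next
  fix x y assume "x \<in> {x. p * x * q \<in> M}" "y \<in> {x. p * x * q \<in> M}"
  then show "x + y \<in> {x. p * x * q \<in> M}" using assms(1) unfolding is_mod_def
    by (simp add: distrib_left distrib_right)
next
  fix r x assume r: "r \<in> R" and x: "x \<in> {x. p * x * q \<in> M}"
  have "p * (r * x) * q = r * (p * x * q)"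
    by (metis assms(2) r mult.assoc)
  then show "r * x \<in> {x. p * x * q \<in> M}" using assms(1) r x unfolding is_mod_def by simp
qed

lemma rspan_mono: "x \<in> rspan R S \<Longrightarrow> S \<subseteq> T \<Longrightarrow> x \<in> rspan R T"
  by (induction rule: rspan.induct) (auto intro: rspan.intros)

lemma rspan_gen: "1 \<in> R \<Longrightarrow> x \<in> S \<Longrightarrow> x \<in> rspan R S"
  using rspan.smul[of 1 R x S] by simp

lemma msum_rspan: "msum (rspan R A) (rspan R B) = rspan R (A \<union> B)"
proof
  show "msum (rspan R A) (rspan R B) \<subseteq> rspan R (A \<union> B)"
    unfolding msum_def by (auto intro!: rspan.add elim: rspan_mono)
next
  show "rspan R (A \<union> B) \<subseteq> msum (rspan R A) (rspan R B)"
  proof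
    fix x assume "x \<in> rspan R (A \<union> B)"
    thus "x \<in> msum (rspan R A) (rspan R B)"
    proof induction
      case zero
      then show ?case unfolding msum_def by (auto intro!: exI[of _ 0] rspan.zero)
    next
      case (smul r x)
      show ?case
      proof (cases "x \<in> A")
        case True
        have "r * x + 0 \<in> msum (rspan R A) (rspan R B)" unfolding msum_def
          using smul(1) True by (blast intro: rspan.smul rspan.zero)
        then show ?thesis by simp
      next
        case False
        then have "x \<in> B" using smul(2) by simp
        have "0 + r * x \<in> msum (rspan R A) (rspan R B)" unfolding msum_def
          using smul(1) \<open>x \<in> B\<close> by (blast intro: rspan.smul rspan.zero)
        then show ?thesis by simp
      qed
    next
      case (add x y)
      then obtain x1 x2 y1 y2 where "x = x1 + x2" "y = y1 + y2" "x1 \<in> rspan R A" "y1 \<in> rspan R A"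
        "x2 \<in> rspan R B" "y2 \<in> rspan R B" unfolding msum_def by auto
      have "(x1 + y1) + (x2 + y2) \<in> msum (rspan R A) (rspan R B)" unfolding msum_def
        using \<open>x1 \<in> rspan R A\<close> \<open>y1 \<in> rspan R A\<close> \<open>x2 \<in> rspan R B\<close> \<open>y2 \<in> rspan R B\<close>
        by (blast intro: rspan.add)
      moreover have "x + y = (x1 + y1) + (x2 + y2)" using \<open>x = x1 + x2\<close> \<open>y = y1 + y2\<close>
        by (simp add: algebra_simps)
      ultimately show ?case by simp
    qed
  qed
qed

lemma zpow_succ:
  assumes "s * s' = 1" "s' * s = 1"
  shows "zpow s s' (i + 1) = zpow s s' i * s"
proof (cases "0 \<le> i")
  case True
  then have "nat (i+1) = Suc (nat i)" by simp
  then show ?thesis using True by (simp add: zpow_def power_Suc2 power_commutes)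
next
  case False
  then have e: "nat (- i) = Suc (nat (- (i+1)))" by simp
  have "zpow s s' (i+1) = s' ^ nat (- (i+1))"
    using False by (cases "i = -1") (auto simp: zpow_def)
  moreover have "zpow s s' i * s = s' ^ nat (- (i+1))"
  proof -
    have "s' ^ nat (- i) * s = s' ^ nat (- (i+1))"
      by (simp only: e power_Suc2 mult.assoc assms(2) mult_1_right)
    then show ?thesis using False by (simp add: zpow_def)
  qed
  ultimately show ?thesis by simp
qed

lemma zpow_pred:
  assumes "s * s' = 1" "s' * s = 1"
  shows "zpow s s' (i - 1) = zpow s s' i * s'"
proof -
  have "zpow s s' i = zpow s s' (i - 1) * s" using zpow_succ[OF assms, of "i-1"] by simp
  then show ?thesis using assms by (simp add: mult.assoc)
qed

lemma zpow_add_nat: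
  assumes "s * s' = 1" "s' * s = 1"
  shows "zpow s s' (i + int k) = zpow s s' i * s ^ k"
proof (induction k)
  case 0 then show ?case by simp
next
  case (Suc k)
  have "i + int (Suc k) = (i + int k) + 1" by simp
  then have "zpow s s' (i + int (Suc k)) = zpow s s' ((i + int k) + 1)" by (rule arg_cong)
  also have "\<dots> = zpow s s' i * s ^ k * s" using zpow_succ[OF assms] Suc by simp
  finally show ?case by (simp add: power_Suc2 mult.assoc power_commutes)
qed

lemma span4:
  fixes s s' a b c d d' :: "'a::ring_1"
  assumes inv: "s * s' = 1" "s' * s = 1"
    and quart: "s ^ 4 = a * s ^ 3 + b * s ^ 2 + c * s + d"
    and dinv: "d' * d = 1"
    and central: "\<And>x. a * x = x * a" "\<And>x. b * x = x * b" "\<And>x. c * x = x * c" "\<And>x. d * x = x * d"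
    and M: "is_mod R M"
    and inR: "a \<in> R" "b \<in> R" "c \<in> R" "d \<in> R" "d' \<in> R" "-a \<in> R" "-b \<in> R" "-c \<in> R"
    and h: "zpow s s' t \<in> M" "zpow s s' (t+1) \<in> M" "zpow s s' (t+2) \<in> M" "zpow s s' (t+3) \<in> M"
  shows "zpow s s' m \<in> M"
proof -
  let ?z = "zpow s s'"
  have comm: "(\<And>x. r * x = x * r) \<Longrightarrow> ?z j * (r * y) = r * (?z j * y)" for r y j
  proof -
    assume h: "\<And>x. r * x = x * r"
    have "?z j * (r * y) = (?z j * r) * y" by (simp add: mult.assoc)
    also have "\<dots> = (r * ?z j) * y" using h[of "?z j"] by simp
    finally show ?thesis by (simp add: mult.assoc)
  qed
  have rel: "?z (j+4) = a * ?z (j+3) + b * ?z (j+2) + c * ?z (j+1) + d * ?z j" for j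
  proof -
    have "?z (j+4) = ?z j * s^4" using zpow_add_nat[OF inv, of j 4] by simp
    also have "\<dots> = ?z j * (a * s ^ 3) + ?z j * (b * s ^ 2) + ?z j * (c * s) + ?z j * d"
      by (simp add: quart distrib_left)
    also have "\<dots> = a * (?z j * s ^ 3) + b * (?z j * s ^ 2) + c * (?z j * s) + d * ?z j"
      using comm[of a, OF central(1)] comm[of b, OF central(2)] comm[of c, OF central(3)]
        central(4)[of "?z j"] by simp
    also have "\<dots> = a * ?z (j+3) + b * ?z (j+2) + c * ?z (j+1) + d * ?z j"
      using zpow_add_nat[OF inv, of j 3] zpow_add_nat[OF inv, of j 2] zpow_add_nat[OF inv, of j 1]
      by simp
    finally show ?thesis .
  qed
  have Madd: "x \<in> M \<Longrightarrow> y \<in> M \<Longrightarrow> x + y \<in> M" for x y using M unfolding is_mod_def by blast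
  have Msm: "r \<in> R \<Longrightarrow> x \<in> M \<Longrightarrow> r * x \<in> M" for r x using M unfolding is_mod_def by blast
  let ?P = "\<lambda>i. ?z i \<in> M \<and> ?z (i+1) \<in> M \<and> ?z (i+2) \<in> M \<and> ?z (i+3) \<in> M"
  have "?P m"
  proof (induction m rule: int_induct[where k=t])
    case base then show ?case using h by simp
  next
    case (step1 i)
    have "?z (i+4) \<in> M" unfolding rel using step1 inR by (intro Madd Msm) auto
    then show ?case using step1 by (simp add: add.assoc)
  next
    case (step2 i)
    let ?j = "i - 1"
    have "d' * (d * ?z ?j) = ?z ?j" by (simp add: mult.assoc[symmetric] dinv)
    also have "d * ?z ?j = ?z (?j+4) + (-a) * ?z (?j+3) + (-b) * ?z (?j+2) + (-c) * ?z (?j+1)"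
      unfolding rel by (simp add: algebra_simps)
    finally have e: "?z ?j = d' * (?z (i+3) + (-a) * ?z (i+2) + (-b) * ?z (i+1) + (-c) * ?z i)"
      by (simp add: algebra_simps)
    have "?z ?j \<in> M" unfolding e using step2 inR by (intro Madd Msm) auto
    moreover have "i - 1 + 1 = i" "i - 1 + 2 = i + 1" "i - 1 + 3 = i + 2" by simp_all
    ultimately show ?case using step2 by metis
  qed
  then show ?thesis by simp
qed


definition gens :: "'a::ring_1 set list \<Rightarrow> 'a set" where
  "gens Xs = {foldr (*) xs 1 | xs. list_all2 (\<lambda>x X. x \<in> X) xs Xs}"

lemma mprod_gens: "mprod R Xs = rspan R (gens Xs)"
  unfolding mprod_def gens_def ..

lemma gens3: "x \<in> X \<Longrightarrow> y \<in> Y \<Longrightarrow> z \<in> Z \<Longrightarrow> x * y * z \<in> gens [X, Y, Z]"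
  unfolding gens_def by (auto intro!: exI[of _ "[x,y,z]"] simp: mult.assoc)

lemma gens2: "x \<in> X \<Longrightarrow> y \<in> Y \<Longrightarrow> x * y \<in> gens [X, Y]"
  unfolding gens_def by (auto intro!: exI[of _ "[x,y]"] simp: mult.assoc)

lemma mod_post:
  assumes "is_mod R M"
  shows "is_mod R {y. \<forall>m. y * g m \<in> M}"
  using assms unfolding is_mod_def by (simp add: distrib_right mult.assoc)

theorem lemma3p1:
  fixes a b c d d' s1 s2 s1' s2' :: "'a::ring_1"
  assumes central: "\<And>x. a * x = x * a" "\<And>x. b * x = x * b"
                   "\<And>x. c * x = x * c" "\<And>x. d * x = x * d"
    and dinv: "d * d' = 1" "d' * d = 1"
    and s1inv: "s1 * s1' = 1" "s1' * s1 = 1"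
    and s2inv: "s2 * s2' = 1" "s2' * s2 = 1"
    and braid: "s1 * s2 * s1 = s2 * s1 * s2"
    and quart1: "s1 ^ 4 = a * s1 ^ 3 + b * s1 ^ 2 + c * s1 + d"
    and quart2: "s2 ^ 4 = a * s2 ^ 3 + b * s2 ^ 2 + c * s2 + d"
  shows "\<forall>m::int.
           s2 * zpow s1 s1' m * s2 \<in> Ufull (coeff_ring a b c d d') s1 s2 s1' s2'
         \<and> s2' * zpow s1 s1' m * s2' \<in> Uprime (coeff_ring a b c d d') s1 s2 s1' s2'
         \<and> s2' ^ 2 * zpow s1 s1' m * s2' \<in> Uprime (coeff_ring a b c d d') s1 s2 s1' s2'"
proof -
  define R where "R = coeff_ring a b c d d'"
  have d'c: "d' * x = x * d'" for x
  proof -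
    have "d' * x = d' * x * (d * d')" using dinv by simp
    also have "\<dots> = d' * (x * d) * d'" by (simp add: mult.assoc)
    also have "\<dots> = d' * (d * x) * d'" using central(4) by simp
    also have "\<dots> = (d' * d) * x * d'" by (simp add: mult.assoc)
    also have "\<dots> = x * d'" using dinv by simp
    finally show ?thesis .
  qed
  have Rc: "\<forall>r\<in>R. \<forall>x. r * x = x * r"
  proof
    fix r assume "r \<in> R"
    then show "\<forall>x. r * x = x * r" unfolding R_def
    proof induction
      case (neg x) then show ?case by simp
    next
      case (add x y) then show ?case by (simp add: distrib_left distrib_right)
    next
      case (mult x y) then show ?case by (metis mult.assoc)
    qed (auto simp: central d'c)
  qed
  have Rm: "\<forall>r\<in>R. \<forall>r'\<in>R. r * r' \<in> R" unfolding R_def by (blast intro: coeff_ring.mult)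
  have R1: "1 \<in> R" and inR: "a \<in> R" "b \<in> R" "c \<in> R" "d \<in> R" "d' \<in> R" "-a \<in> R" "-b \<in> R" "-c \<in> R"
    unfolding R_def by (auto intro: coeff_ring.intros)
  define u1 where "u1 = subalg R s1"
  define u2 where "u2 = subalg R s2"
  have u1mod: "is_mod R u1" unfolding u1_def subalg_def by (rule rspan_mod[OF Rm])
  have u2mod: "is_mod R u2" unfolding u2_def subalg_def by (rule rspan_mod[OF Rm])
  have pw1: "s1 ^ n \<in> u1" for n unfolding u1_def subalg_def by (rule rspan_gen[OF R1]) blast
  have pw2: "s2 ^ n \<in> u2" for n unfolding u2_def subalg_def by (rule rspan_gen[OF R1]) blast
  have Z1: "zpow s1 s1' m \<in> u1" for m
    by (rule span4[OF s1inv quart1 dinv(2) central u1mod inR, where t=0])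
       (use pw1[of 0] pw1[of 1] pw1[of 2] pw1[of 3] in \<open>simp_all add: zpow_def\<close>)
  have Z2: "zpow s2 s2' m \<in> u2" for m
    by (rule span4[OF s2inv quart2 dinv(2) central u2mod inR, where t=0])
       (use pw2[of 0] pw2[of 1] pw2[of 2] pw2[of 3] in \<open>simp_all add: zpow_def\<close>)
  have u1e: "1 \<in> u1" "s1 \<in> u1" "s1' \<in> u1" "s1 * s1 \<in> u1"
    using Z1[of 0] Z1[of 1] Z1[of "-1"] Z1[of 2] by (simp_all add: zpow_def power2_eq_square)
  have u2e: "1 \<in> u2" "s2 \<in> u2" "s2' \<in> u2" "s2 * s2 \<in> u2" "s2' * s2' \<in> u2"
    using Z2[of 0] Z2[of 1] Z2[of "-1"] Z2[of 2] Z2[of "-2"] by (simp_all add: zpow_def power2_eq_square)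
  define U' where "U' = Uprime R s1 s2 s1' s2'"
  define UF where "UF = Ufull R s1 s2 s1' s2'"
  have U'eq: "U' = rspan R (((gens [u1,u2,u1] \<union> gens [u1,{s2*s1'*s2},u1]) \<union> gens [u1,{s2'*s1*s2'},u1])
                 \<union> gens [u1,{s2'*s1'^2*s2'}])"
    unfolding U'_def Uprime_def Let_def mprod_gens msum_rspan u1_def u2_def ..
  have UFeq: "UF = rspan R ((((gens [u1,u2,u1] \<union> gens [u1,{s2*s1'*s2},u1]) \<union> gens [u1,{s2'*s1*s2'},u1])
                 \<union> gens [u1,{s2'*s1'^2*s2'}]) \<union> gens [u1,{s2*s1'^2*s2},u1] \<union> gens [u1,{s2'^2*s1'^2*s2'^2},u1])"
    unfolding UF_def Ufull_def Uprime_def Let_def mprod_gens msum_rspan u1_def u2_def ..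
  have U'mod: "is_mod R U'" unfolding U'eq by (rule rspan_mod[OF Rm])
  have UFmod: "is_mod R UF" unfolding UFeq by (rule rspan_mod[OF Rm])
  have G1: "x \<in> u1 \<Longrightarrow> y \<in> u2 \<Longrightarrow> z \<in> u1 \<Longrightarrow> x * y * z \<in> U'" for x y z
    unfolding U'eq by (rule rspan_gen[OF R1]) (blast intro: gens3)
  have G2: "x \<in> u1 \<Longrightarrow> z \<in> u1 \<Longrightarrow> x * (s2*s1'*s2) * z \<in> U'" for x z
    unfolding U'eq by (rule rspan_gen[OF R1]) (blast intro: gens3)
  have G3: "x \<in> u1 \<Longrightarrow> z \<in> u1 \<Longrightarrow> x * (s2'*s1*s2') * z \<in> U'" for x z
    unfolding U'eq by (rule rspan_gen[OF R1]) (blast intro: gens3)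
  have G4: "x \<in> u1 \<Longrightarrow> x * (s2'*s1'^2*s2') \<in> U'" for x
    unfolding U'eq by (rule rspan_gen[OF R1]) (blast intro: gens2)
  have F1: "x \<in> u1 \<Longrightarrow> y \<in> u2 \<Longrightarrow> z \<in> u1 \<Longrightarrow> x * y * z \<in> UF" for x y z
    unfolding UFeq by (rule rspan_gen[OF R1]) (blast intro: gens3)
  have F2: "x \<in> u1 \<Longrightarrow> z \<in> u1 \<Longrightarrow> x * (s2*s1'*s2) * z \<in> UF" for x z
    unfolding UFeq by (rule rspan_gen[OF R1]) (blast intro: gens3)
  have F5: "x \<in> u1 \<Longrightarrow> z \<in> u1 \<Longrightarrow> x * (s2*s1'^2*s2) * z \<in> UF" for x z
    unfolding UFeq by (rule rspan_gen[OF R1]) (blast intro: gens3)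
  have c1: "s1' * (s1 * x) = x" for x by (simp add: mult.assoc[symmetric] s1inv)
  have c2: "s1 * (s1' * x) = x" for x by (simp add: mult.assoc[symmetric] s1inv)
  have c3: "s2' * (s2 * x) = x" for x by (simp add: mult.assoc[symmetric] s2inv)
  have c4: "s2 * (s2' * x) = x" for x by (simp add: mult.assoc[symmetric] s2inv)
  note cs = c1 c2 c3 c4 s1inv s2inv mult.assoc
  have A: "s2 * s1 * s2' = s1' * s2 * s1"
  proof -
    have "s2 * s1 * s2' = s1' * (s1 * s2 * s1) * s2'" by (simp add: cs)
    also have "\<dots> = s1' * (s2 * s1 * s2) * s2'" by (simp only: braid)
    also have "\<dots> = s1' * s2 * s1" by (simp add: cs)
    finally show ?thesis .
  qed
  have B: "s2 * s1' * s2' = s1' * s2' * s1"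
  proof -
    have "s1' * s2' * s1 = (s2 * s1' * s2') * (s2 * s1 * s2') * (s1' * s2' * s1)" by (simp add: cs)
    also have "\<dots> = (s2 * s1' * s2') * (s1' * s2 * s1) * (s1' * s2' * s1)" by (simp only: A)
    also have "\<dots> = s2 * s1' * s2'" by (simp add: cs)
    finally show ?thesis by simp
  qed
  have C: "s2' * s1' * s2' = s1' * s2' * s1'"
  proof -
    have "s1' * s2' * s1' = (s2' * s1' * s2') * (s2 * s1 * s2) * (s1' * s2' * s1')" by (simp add: cs)
    also have "\<dots> = (s2' * s1' * s2') * (s1 * s2 * s1) * (s1' * s2' * s1')" by (simp only: braid)
    also have "\<dots> = s2' * s1' * s2'" by (simp add: cs)
    finally show ?thesis by simp
  qed
  have conj: "s2 * zpow s1 s1' m * s2' = s1' * zpow s2 s2' m * s1" for m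
  proof (induction m rule: int_induct[where k=0])
    case base then show ?case by (simp add: zpow_def cs)
  next
    case (step1 i)
    have "s2 * zpow s1 s1' (i+1) * s2' = (s2 * zpow s1 s1' i * s2') * (s2 * s1 * s2')"
      by (simp add: zpow_succ[OF s1inv] cs)
    also have "\<dots> = (s1' * zpow s2 s2' i * s1) * (s1' * s2 * s1)" using step1 A by simp
    also have "\<dots> = s1' * zpow s2 s2' (i+1) * s1" by (simp add: zpow_succ[OF s2inv] cs)
    finally show ?case .
  next
    case (step2 i)
    have "s2 * zpow s1 s1' (i-1) * s2' = (s2 * zpow s1 s1' i * s2') * (s2 * s1' * s2')"
      by (simp add: zpow_pred[OF s1inv] cs)
    also have "\<dots> = (s1' * zpow s2 s2' i * s1) * (s1' * s2' * s1)" using step2 B by simp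
    also have "\<dots> = s1' * zpow s2 s2' (i-1) * s1" by (simp add: zpow_pred[OF s2inv] cs)
    finally show ?case .
  qed
  have P1: "s2 * zpow s1 s1' m * s2 \<in> UF" for m
  proof -
    have M: "is_mod R {x. s2 * x * s2 \<in> UF}" by (rule mod_pre[OF UFmod Rc])
    have f1: "s2 * s1' ^ 2 * s2 \<in> UF" using F5[OF u1e(1) u1e(1)] by simp
    have f2: "s2 * s1' * s2 \<in> UF" using F2[OF u1e(1) u1e(1)] by simp
    have f3: "s2 * s2 \<in> UF" using F1[OF u1e(1) u2e(4) u1e(1)] by simp
    have f4: "s2 * s1 * s2 \<in> UF" using F1[OF u1e(2) u2e(2) u1e(2)] braid by simp
    show ?thesis
      by (rule span4[OF s1inv quart1 dinv(2) central M inR, where t="-2", simplified])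
         (use f1 f2 f3 f4 in \<open>simp_all add: zpow_def\<close>)
  qed
  have P2: "s2' * zpow s1 s1' m * s2' \<in> U'" for m
  proof -
    have M: "is_mod R {x. s2' * x * s2' \<in> U'}" by (rule mod_pre[OF U'mod Rc])
    have f1: "s2' * s1' ^ 2 * s2' \<in> U'" using G4[OF u1e(1)] by simp
    have f2: "s2' * s1' * s2' \<in> U'" using G1[OF u1e(3) u2e(3) u1e(3)] C by simp
    have f3: "s2' * s2' \<in> U'" using G1[OF u1e(1) u2e(5) u1e(1)] by simp
    have f4: "s2' * s1 * s2' \<in> U'" using G3[OF u1e(1) u1e(1)] by simp
    show ?thesis
      by (rule span4[OF s1inv quart1 dinv(2) central M inR, where t="-2", simplified])
         (use f1 f2 f3 f4 in \<open>simp_all add: zpow_def\<close>)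
  qed
  have Q2: "s2 ^ 2 * zpow s1 s1' m * s2' \<in> U'" for m
  proof -
    have M: "is_mod R {x. s2 ^ 2 * x * s2' \<in> U'}" by (rule mod_pre[OF U'mod Rc])
    have cm2: "s2 * s1' ^ 2 * s2' = s1' * s2' ^ 2 * s1" using conj[of "-2"] by (simp add: zpow_def)
    have "s2 ^ 2 * s1' ^ 2 * s2' = s2 * (s2 * s1' ^ 2 * s2')" by (simp add: power2_eq_square mult.assoc)
    also have "\<dots> = (s2 * s1' * s2') * s2' * s1" unfolding cm2 by (simp add: power2_eq_square mult.assoc)
    also have "\<dots> = s1' * (s2' * s1 * s2') * s1" unfolding B by (simp add: mult.assoc)
    finally have f1: "s2 ^ 2 * s1' ^ 2 * s2' \<in> U'" using G3[OF u1e(3) u1e(2)] by simp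
    have "s2 ^ 2 * s1' * s2' = s2 * (s2 * s1' * s2')" by (simp add: power2_eq_square mult.assoc)
    also have "\<dots> = (s2 * s1' * s2') * s1" by (metis B mult.assoc)
    also have "\<dots> = s1' * s2' * (s1 * s1)" unfolding B by (simp add: mult.assoc)
    finally have f2: "s2 ^ 2 * s1' * s2' \<in> U'" using G1[OF u1e(3) u2e(3) u1e(4)] by simp
    have f3: "s2 ^ 2 * s2' \<in> U'" using G1[OF u1e(1) u2e(2) u1e(1)] by (simp add: power2_eq_square cs)
    have "s2 ^ 2 * s1 * s2' = s2 * (s2 * s1 * s2')" by (simp add: power2_eq_square mult.assoc)
    also have "\<dots> = 1 * (s2 * s1' * s2) * s1" unfolding A by (simp add: mult.assoc)
    finally have f4: "s2 ^ 2 * s1 * s2' \<in> U'" using G2[OF u1e(1) u1e(2)] by simp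
    show ?thesis
      by (rule span4[OF s1inv quart1 dinv(2) central M inR, where t="-2", simplified])
         (use f1 f2 f3 f4 in \<open>simp_all add: zpow_def\<close>)
  qed
  have P3: "s2' ^ 2 * zpow s1 s1' m * s2' \<in> U'" for m
  proof -
    have M: "is_mod R {y. \<forall>m. y * (zpow s1 s1' m * s2') \<in> U'}" by (rule mod_post[OF U'mod])
    have f1: "s2' * (zpow s1 s1' m * s2') \<in> U'" for m using P2[of m] by (simp add: mult.assoc)
    have f2: "1 * (zpow s1 s1' m * s2') \<in> U'" for m using G1[OF Z1[of m] u2e(3) u1e(1)] by simp
    have f3: "s2 * (zpow s1 s1' m * s2') \<in> U'" for m
      using G1[OF u1e(3) Z2[of m] u1e(2)] conj[of m] by (simp add: mult.assoc)
    have f4: "s2 ^ 2 * (zpow s1 s1' m * s2') \<in> U'" for m using Q2[of m] by (simp add: mult.assoc)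
    have "zpow s2 s2' (-2) \<in> {y. \<forall>m. y * (zpow s1 s1' m * s2') \<in> U'}"
      by (rule span4[OF s2inv quart2 dinv(2) central M inR, where t="-1"])
         (use f1 f2 f3 f4 in \<open>simp_all add: zpow_def\<close>)
    then show ?thesis by (simp add: zpow_def mult.assoc)
  qed
  show ?thesis using P1 P2 P3 unfolding UF_def U'_def R_def by blast
qed

end
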